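(* Let $\tau\in\mathbb N$ and $f:\mathbb Z_+\times\mathbb R\to\mathbb R$, continuous in $x$, be asymptotically $\tau$-periodic in time, $f=P+R$. Assume: the $\tau$-periodic solutions of $x(t+1)=P(t,x(t))$ are isolated; every $g\in H^+(f)$ is strictly increasing in $x$; and the solution $\varphi(t,u_0,f)$ of $x(t+1)=f(t,x(t))$, $x(0)=u_0$, is bounded on $\mathbb Z_+$. Then $\varphi(t,u_0,f)$ is asymptotically $\tau$-periodic: there is a $\tau$-periodic sequence $p$ with $\varphi(t,u_0,f)-p(t)\to0$ as $t\to\infty$.
   Context: Asymptotically $\tau$-periodic in time: $f=P+R$ with $P(t+\tau,x)=P(t,x)$ for all $(t,x)$ and $\lim_{t\to\infty}R(t,x)=0$ uniformly in $x$ on compact subsets of $\mathbb R$. $H^+(f)$ is the closure of $\{f(\cdot+h,\cdot):h\in\mathbb Z_+\}$ in the topology of uniform convergence on finite $t$-sets times compact $x$-sets. A $\tau$-periodic solution $\varphi(t,u_0,P)$ (i.e. $\varphi(\tau,u_0,P)=u_0$) of $x(t+1)=P(t,x(t))$ is isolated if there is $\delta>0$ such that no $u\neq u_0$ with $|u-u_0|<\delta$ gives a $\tau$-periodic solution. *)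

theory Defs
  imports "HOL-Analysis.Analysis"
begin

primrec sol :: "(nat \<Rightarrow> real \<Rightarrow> real) \<Rightarrow> real \<Rightarrow> nat \<Rightarrow> real" where
  "sol f u0 0 = u0"
| "sol f u0 (Suc t) = f t (sol f u0 t)"

text \<open>H^+(f): closure of the forward translates f(.+h,.) in the topology of uniform
  convergence on finite t-sets times compact x-sets (neighbourhood-basis description).\<close>
definition Hplus :: "(nat \<Rightarrow> real \<Rightarrow> real) \<Rightarrow> (nat \<Rightarrow> real \<Rightarrow> real) set" where
  "Hplus f = {g. \<forall>T K e. finite T \<longrightarrow> compact K \<longrightarrow> e > 0 \<longrightarrow>
      (\<exists>h. \<forall>t\<in>T. \<forall>x\<in>K. \<bar>f (t + h) x - g t x\<bar> < e)}"

definition periodic_sol :: "nat \<Rightarrow> (nat \<Rightarrow> real \<Rightarrow> real) \<Rightarrow> real \<Rightarrow> bool" where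
  "periodic_sol \<tau> P u0 \<longleftrightarrow> sol P u0 \<tau> = u0"

definition isolated_periodic_sol :: "nat \<Rightarrow> (nat \<Rightarrow> real \<Rightarrow> real) \<Rightarrow> real \<Rightarrow> bool" where
  "isolated_periodic_sol \<tau> P u0 \<longleftrightarrow>
     (\<exists>\<delta>>0. \<forall>u. u \<noteq> u0 \<and> \<bar>u - u0\<bar> < \<delta> \<longrightarrow> \<not> periodic_sol \<tau> P u)"

end

theory Submission
  imports Defs
begin

theorem mainTheorem19:
  fixes \<tau> :: nat and f P R :: "nat \<Rightarrow> real \<Rightarrow> real" and u0 :: real
  assumes tau_pos: "\<tau> > 0"
    and f_cont: "\<And>t. continuous_on UNIV (f t)"
    and f_decomp: "\<And>t x. f t x = P t x + R t x"
    and P_per: "\<And>t x. P (t + \<tau>) x = P t x"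
    and R_lim: "\<And>K e. compact K \<Longrightarrow> e > 0 \<Longrightarrow>
                  \<exists>N. \<forall>t\<ge>N. \<forall>x\<in>K. \<bar>R t x\<bar> < e"
    and isolated: "\<And>v. periodic_sol \<tau> P v \<Longrightarrow> isolated_periodic_sol \<tau> P v"
    and incr: "\<And>g t. g \<in> Hplus f \<Longrightarrow> strict_mono (g t)"
    and bdd: "bounded (range (sol f u0))"
  shows "\<exists>p :: nat \<Rightarrow> real. (\<forall>t. p (t + \<tau>) = p t) \<and>
           (\<lambda>t. sol f u0 t - p t) \<longlonglongrightarrow> 0"
proof -
  have Pper: "P (r + N*\<tau>) x = P r x" for r N x
  proof (induction N)
    case 0 show ?case by simp
  next
    case (Suc N)
    have "P (r + Suc N * \<tau>) x = P ((r + N*\<tau>) + \<tau>) x" by (simp add: ac_simps)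
    also have "\<dots> = P (r + N*\<tau>) x" by (rule P_per)
    finally show ?case using Suc by simp
  qed
  have Nle: "N \<le> N*\<tau>" for N using tau_pos by simp
  have fcont: "isCont (f t) x" for t x
    using f_cont[of t] continuous_on_eq_continuous_at by blast
  have Pcont: "isCont (P r) x0" for r x0
    unfolding continuous_at_eps_delta
  proof (intro allI impI)
    fix e :: real assume e: "e > 0"
    obtain N where N: "\<forall>t\<ge>N. \<forall>x\<in>cball x0 1. \<bar>R t x\<bar> < e/3"
      using R_lim[of "cball x0 1" "e/3"] e by auto
    define t where "t = r + N*\<tau>"
    have tN: "t \<ge> N" using Nle[of N] unfolding t_def by linarith
    obtain d where d: "d > 0" "\<forall>y. dist y x0 < d \<longrightarrow> dist (f t y) (f t x0) < e/3"
      using fcont[where t=t and x=x0] e unfolding continuous_at_eps_delta by (meson divide_pos_pos zero_less_numeral)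
    show "\<exists>d>0. \<forall>y. dist y x0 < d \<longrightarrow> dist (P r y) (P r x0) < e"
    proof (intro exI[of _ "min d 1"] conjI allI impI)
      show "min d 1 > 0" using d by simp
      fix y assume y: "dist y x0 < min d 1"
      have Py: "P r y = f t y - R t y" "P r x0 = f t x0 - R t x0"
        using f_decomp[of t] Pper[of r N] unfolding t_def by simp_all
      have "y \<in> cball x0 1" using y by (simp add: dist_commute)
      hence "\<bar>R t y\<bar> < e/3" using N tN by blast
      moreover have "\<bar>R t x0\<bar> < e/3" using N tN by simp
      moreover have "\<bar>f t y - f t x0\<bar> < e/3" using d y by (simp add: dist_real_def)
      ultimately show "dist (P r y) (P r x0) < e" unfolding Py dist_real_def by arith
    qed
  qed
  have B: "(\<lambda>j. f (q j * \<tau> + r) (z j)) \<longlonglongrightarrow> P r w"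
    if q: "filterlim q at_top sequentially" and z: "z \<longlonglongrightarrow> w"
    for q :: "nat \<Rightarrow> nat" and z w r
  proof -
    have eq: "f (q j * \<tau> + r) (z j) = P r (z j) + R (q j * \<tau> + r) (z j)" for j
      using f_decomp Pper[of r "q j"] by (simp add: add.commute)
    have 1: "(\<lambda>j. P r (z j)) \<longlonglongrightarrow> P r w" using isCont_tendsto_compose[OF Pcont z] .
    have 2: "(\<lambda>j. R (q j * \<tau> + r) (z j)) \<longlonglongrightarrow> 0"
    proof (rule tendstoI)
      fix e :: real assume e: "e > 0"
      obtain N where N: "\<forall>t\<ge>N. \<forall>x\<in>cball w 1. \<bar>R t x\<bar> < e"
        using R_lim[of "cball w 1" e] e by auto
      have ev1: "\<forall>\<^sub>F j in sequentially. dist (z j) w < 1" using z by (rule tendstoD) simp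
      have ev2: "\<forall>\<^sub>F j in sequentially. q j \<ge> N" using q by (simp add: filterlim_at_top)
      show "\<forall>\<^sub>F j in sequentially. dist (R (q j * \<tau> + r) (z j)) 0 < e"
        using ev1 ev2
      proof eventually_elim
        case (elim j)
        have "q j * \<tau> + r \<ge> N" using Nle[of "q j"] elim by linarith
        moreover have "z j \<in> cball w 1" using elim by (simp add: dist_commute)
        ultimately show ?case using N by simp
      qed
    qed
    show ?thesis unfolding eq using tendsto_add[OF 1 2] by simp
  qed
  have C: "(\<lambda>j. sol f u0 (q j * \<tau> + r)) \<longlonglongrightarrow> sol P v r"
    if q: "filterlim q at_top sequentially" and y: "(\<lambda>j. sol f u0 (q j * \<tau>)) \<longlonglongrightarrow> v"
    for q v r
  proof (induction r)
    case 0 then show ?case using y by simp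
  next
    case (Suc r)
    have "(\<lambda>j. f (q j * \<tau> + r) (sol f u0 (q j * \<tau> + r))) \<longlonglongrightarrow> P r (sol P v r)"
      by (rule B[OF q Suc])
    then show ?case by simp
  qed
  have PH: "P \<in> Hplus f"
    unfolding Hplus_def
  proof (intro CollectI allI impI)
    fix T :: "nat set" and K :: "real set" and e :: real
    assume "finite T" "compact K" "e > 0"
    then obtain N where N: "\<forall>t\<ge>N. \<forall>x\<in>K. \<bar>R t x\<bar> < e" using R_lim by blast
    show "\<exists>h. \<forall>t\<in>T. \<forall>x\<in>K. \<bar>f (t + h) x - P t x\<bar> < e"
    proof (intro exI[of _ "N*\<tau>"] ballI)
      fix t x assume "t \<in> T" "x \<in> K"
      have "t + N*\<tau> \<ge> N" using Nle[of N] by linarith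
      then show "\<bar>f (t + N*\<tau>) x - P t x\<bar> < e"
        using N \<open>x \<in> K\<close> f_decomp[of "t + N*\<tau>" x] Pper[of t N x] by simp
    qed
  qed
  have monoP: "P t a \<le> P t b" if "a \<le> b" for t a b
    using incr[OF PH, of t] that by (simp add: strict_mono_less_eq)
  have monoS: "sol P a n \<le> sol P b n" if "a \<le> b" for a b n
    using that by (induction n) (auto intro: monoP)
  define y where "y k = sol f u0 (k*\<tau>)" for k
  have ybdd: "bounded (range y)"
    by (rule bounded_subset[OF bdd]) (auto simp: y_def)
  have sub: "\<exists>v q. (\<lambda>j. y (s (q j))) \<longlonglongrightarrow> v \<and> (\<lambda>j. y (Suc (s (q j)))) \<longlonglongrightarrow> sol P v \<tau>"
    if s: "\<forall>j. s j \<ge> j" for s :: "nat \<Rightarrow> nat"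
  proof -
    have "seq_compact (closure (range y))"
      using ybdd by (simp add: compact_imp_seq_compact compact_closure)
    then obtain l r where r: "strict_mono (r :: nat \<Rightarrow> nat)" "((\<lambda>j. y (s j)) \<circ> r) \<longlonglongrightarrow> l"
      by (rule seq_compactE) (auto intro: closure_subset[THEN subsetD])
    have qlim: "filterlim (\<lambda>j. s (r j)) at_top sequentially"
      unfolding filterlim_at_top eventually_sequentially
      using s seq_suble[OF r(1)] le_trans by blast
    have yl: "(\<lambda>j. sol f u0 (s (r j) * \<tau>)) \<longlonglongrightarrow> l" using r(2) by (simp add: y_def o_def)
    have "(\<lambda>j. sol f u0 (s (r j) * \<tau> + \<tau>)) \<longlonglongrightarrow> sol P l \<tau>" by (rule C[OF qlim yl])
    then have "(\<lambda>j. y (Suc (s (r j)))) \<longlonglongrightarrow> sol P l \<tau>" by (simp add: y_def add.commute)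
    with yl show ?thesis by (auto simp: y_def)
  qed
  have dich: "(\<exists>N. \<forall>k\<ge>N. c \<le> y k) \<or> (\<exists>N. \<forall>k\<ge>N. y k \<le> c)"
    if nf: "sol P c \<tau> \<noteq> c" for c
  proof (cases "sol P c \<tau> > c")
    case True
    have "\<exists>N. \<forall>k\<ge>N. c \<le> y k \<longrightarrow> c \<le> y (Suc k)"
    proof (rule ccontr)
      assume "\<not> ?thesis"
      then have "\<forall>N. \<exists>k\<ge>N. c \<le> y k \<and> y (Suc k) < c" by (auto simp: not_le)
      then obtain s where s: "\<forall>N. s N \<ge> N \<and> c \<le> y (s N) \<and> y (Suc (s N)) < c" by metis
      then obtain v q where v: "(\<lambda>j. y (s (q j))) \<longlonglongrightarrow> v"
        "(\<lambda>j. y (Suc (s (q j)))) \<longlonglongrightarrow> sol P v \<tau>" using sub by blast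
      have "c \<le> v" by (rule LIMSEQ_le_const[OF v(1)]) (use s in auto)
      moreover have "sol P v \<tau> \<le> c" by (rule LIMSEQ_le_const2[OF v(2)]) (use s in \<open>auto intro: less_imp_le\<close>)
      ultimately show False using monoS[of c v \<tau>] True by linarith
    qed
    then obtain N where N: "\<forall>k\<ge>N. c \<le> y k \<longrightarrow> c \<le> y (Suc k)" by blast
    show ?thesis
    proof (cases "\<exists>k0\<ge>N. c \<le> y k0")
      case True
      then obtain k0 where k0: "k0 \<ge> N" "c \<le> y k0" by blast
      have "c \<le> y k" if "k0 \<le> k" for k
        using that
      proof (induction k rule: dec_induct)
        case base then show ?case using k0 by simp
      next
        case (step k) then show ?case using N k0(1) by auto
      qed
      then show ?thesis by blast
    next
      case False then have "\<forall>k\<ge>N. y k \<le> c" by force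
      then show ?thesis by blast
    qed
  next
    case False
    then have lt: "sol P c \<tau> < c" using nf by linarith
    have "\<exists>N. \<forall>k\<ge>N. y k \<le> c \<longrightarrow> y (Suc k) \<le> c"
    proof (rule ccontr)
      assume "\<not> ?thesis"
      then have "\<forall>N. \<exists>k\<ge>N. y k \<le> c \<and> c < y (Suc k)" by (auto simp: not_le)
      then obtain s where s: "\<forall>N. s N \<ge> N \<and> y (s N) \<le> c \<and> c < y (Suc (s N))" by metis
      then obtain v q where v: "(\<lambda>j. y (s (q j))) \<longlonglongrightarrow> v"
        "(\<lambda>j. y (Suc (s (q j)))) \<longlonglongrightarrow> sol P v \<tau>" using sub by blast
      have "v \<le> c" by (rule LIMSEQ_le_const2[OF v(1)]) (use s in auto)
      moreover have "c \<le> sol P v \<tau>" by (rule LIMSEQ_le_const[OF v(2)]) (use s in \<open>auto intro: less_imp_le\<close>)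
      ultimately show False using monoS[of v c \<tau>] lt by linarith
    qed
    then obtain N where N: "\<forall>k\<ge>N. y k \<le> c \<longrightarrow> y (Suc k) \<le> c" by blast
    show ?thesis
    proof (cases "\<exists>k0\<ge>N. y k0 \<le> c")
      case True
      then obtain k0 where k0: "k0 \<ge> N" "y k0 \<le> c" by blast
      have "y k \<le> c" if "k0 \<le> k" for k
        using that
      proof (induction k rule: dec_induct)
        case base then show ?case using k0 by simp
      next
        case (step k) then show ?case using N k0(1) by auto
      qed
      then show ?thesis by blast
    next
      case False then have "\<forall>k\<ge>N. c \<le> y k" by force
      then show ?thesis by blast
    qed
  qed
  have dense: "\<exists>c. a < c \<and> c < b \<and> sol P c \<tau> \<noteq> c" if "a < b" for a b
  proof (cases "sol P ((a+b)/2) \<tau> = (a+b)/2")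
    case False then show ?thesis using that by (intro exI[of _ "(a+b)/2"]) auto
  next
    case True
    then obtain d where d: "d > 0" "\<forall>u. u \<noteq> (a+b)/2 \<and> \<bar>u - (a+b)/2\<bar> < d \<longrightarrow> \<not> periodic_sol \<tau> P u"
      using isolated[of "(a+b)/2"] unfolding isolated_periodic_sol_def periodic_sol_def by blast
    obtain \<mu> where m: "0 < \<mu>" "\<mu> \<le> d" "\<mu> \<le> (b-a)/2"
      using d(1) \<open>a < b\<close> by (intro that[of "min d ((b-a)/2)"]) (auto simp: min_def)
    define c where "c = (a+b)/2 + \<mu> / 2"
    have e: "c - (a+b)/2 = \<mu>/2" unfolding c_def by simp
    have "\<bar>\<mu>/2\<bar> < d" using m by simp
    then have "\<bar>c - (a+b)/2\<bar> < d" by (simp only: e)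
    moreover have "c \<noteq> (a+b)/2" using e m(1) by linarith
    ultimately have "c \<noteq> (a+b)/2" "\<bar>c - (a+b)/2\<bar> < d" by auto
    moreover have "a < c" "c < b" using e m \<open>a < b\<close> by (auto simp: field_simps)
    ultimately have "c \<noteq> (a+b)/2" "\<bar>c - (a+b)/2\<bar> < d" "a < c" "c < b" by auto
    then show ?thesis using d(2) unfolding periodic_sol_def by blast
  qed
  obtain Bd where Bd: "\<forall>k. \<bar>y k\<bar> \<le> Bd" using ybdd unfolding bounded_real by auto
  define S where "S = {c. \<exists>N. \<forall>k\<ge>N. c \<le> y k}"
  have Sne: "S \<noteq> {}"
  proof -
    have "-Bd \<in> S" unfolding S_def
    proof (intro CollectI exI allI impI)
      fix k show "- Bd \<le> y k" using Bd[rule_format, of k] by linarith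
    qed
    then show ?thesis by blast
  qed
  have Sbdd: "bdd_above S"
    unfolding bdd_above_def S_def
  proof (intro exI[of _ Bd] ballI)
    fix c assume "c \<in> {c. \<exists>N. \<forall>k\<ge>N. c \<le> y k}"
    then obtain N where "\<forall>k\<ge>N. c \<le> y k" by blast
    then have "c \<le> y N" by simp
    then show "c \<le> Bd" using Bd[rule_format, of N] by linarith
  qed
  define L where "L = Sup S"
  have yL: "y \<longlonglongrightarrow> L"
  proof (rule tendstoI)
    fix e :: real assume e: "e > 0"
    have "L - e < Sup S" using e unfolding L_def by simp
    then obtain s where s: "s \<in> S" "L - e < s" using less_cSupE[OF _ Sne] by blast
    then obtain N1 where N1: "\<forall>k\<ge>N1. s \<le> y k" unfolding S_def by blast
    obtain c where c: "L < c" "c < L + e" "sol P c \<tau> \<noteq> c" using dense[of L "L+e"] e by auto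
    have "c \<notin> S" using cSup_upper[OF _ Sbdd, of c] c(1) unfolding L_def by auto
    then have "\<not> (\<exists>N. \<forall>k\<ge>N. c \<le> y k)" unfolding S_def by blast
    then obtain N2 where N2: "\<forall>k\<ge>N2. y k \<le> c" using dich[OF c(3)] by blast
    show "\<forall>\<^sub>F k in sequentially. dist (y k) L < e"
      unfolding eventually_sequentially
    proof (intro exI[of _ "max N1 N2"] allI impI)
      fix k assume "max N1 N2 \<le> k"
      then have "s \<le> y k" "y k \<le> c" using N1 N2 by auto
      then show "dist (y k) L < e" using s c unfolding dist_real_def by arith
    qed
  qed
  have conv: "(\<lambda>k. sol f u0 (k * \<tau> + r)) \<longlonglongrightarrow> sol P L r" for r
    by (rule C[OF filterlim_ident]) (use yL in \<open>simp add: y_def[symmetric]\<close>)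
  define p where "p t = sol P L (t mod \<tau>)" for t
  show ?thesis
  proof (intro exI[of _ p] conjI allI)
    fix t show "p (t + \<tau>) = p t" by (simp add: p_def)
  next
    show "(\<lambda>t. sol f u0 t - p t) \<longlonglongrightarrow> 0"
    proof (rule tendstoI)
      fix e :: real assume e: "e > 0"
      have "\<forall>r\<in>{..<\<tau>}. \<forall>\<^sub>F k in sequentially. dist (sol f u0 (k * \<tau> + r)) (sol P L r) < e"
        using tendstoD[OF conv e] by blast
      then have "\<forall>\<^sub>F k in sequentially. \<forall>r\<in>{..<\<tau>}. dist (sol f u0 (k * \<tau> + r)) (sol P L r) < e"
        by (rule eventually_ball_finite[OF finite_lessThan])
      then obtain N where N: "\<forall>k\<ge>N. \<forall>r<\<tau>. dist (sol f u0 (k * \<tau> + r)) (sol P L r) < e"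
        unfolding eventually_sequentially by auto
      show "\<forall>\<^sub>F t in sequentially. dist (sol f u0 t - p t) 0 < e"
        unfolding eventually_sequentially
      proof (intro exI[of _ "N*\<tau>"] allI impI)
        fix t assume t: "N * \<tau> \<le> t"
        have "N \<le> t div \<tau>"
          using div_le_mono[OF t, of \<tau>] tau_pos by simp
        moreover have "t mod \<tau> < \<tau>" using tau_pos by simp
        ultimately have "dist (sol f u0 (t div \<tau> * \<tau> + t mod \<tau>)) (sol P L (t mod \<tau>)) < e"
          using N by blast
        then show "dist (sol f u0 t - p t) 0 < e"
          by (simp add: p_def dist_real_def)
      qed
    qed
  qed
qed

end
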